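(* If $a_1,a_2,a_3,a_4\ge2$ and $D=a_1+a_2+a_3+a_4$, then the leading term of $V_3(x_1^{a_1}x_2^{a_2}x_1^{a_3}x_2^{a_4})$ is $+s^{3D-4}$.
   Context: $\mathcal{B}_3$ is the 3-strand braid group with Artin generators $x_1,x_2$; $V_3(\beta)$ is the Jones polynomial of the closure of $\beta$, normalized by $V(\text{unknot})=1$ and $q^{-1}V_{L_+}-qV_{L_-}=(q^{1/2}-q^{-1/2})V_{L_0}$, written as a Laurent polynomial in $s=q^{-1/2}$. Conventions: closures of $\alpha x_i^{e+2}\gamma$, $\alpha x_i^{e+1}\gamma$, $\alpha x_i^{e}\gamma$ play the roles of $L_-,L_0,L_+$ (e.g. the closure of $x_1^2\in\mathcal B_2$ has Jones polynomial $-s-s^5$). The leading term is the term of highest degree in $s$. *)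

theory Defs
  imports "HOL-Computational_Algebra.Formal_Laurent_Series"
begin

text \<open>3-strand braid words: a list of nonzero integers, where the entry \<open>i\<close>
  (\<open>i \<in> {1,2}\<close>) stands for the Artin generator \<open>x_i\<close> and \<open>-i\<close> for its inverse.\<close>

definition braid3_word :: "int list \<Rightarrow> bool" where
  "braid3_word w \<longleftrightarrow> (\<forall>g \<in> set w. g \<in> {1, 2, -1, -2})"

definition crossing_sign :: "int \<Rightarrow> int" where
  "crossing_sign g = (if g > 0 then 1 else -1)"

definition writhe :: "int list \<Rightarrow> int" where
  "writhe w = (\<Sum>k<length w. crossing_sign (w ! k))"

text \<open>Kauffman states of the closed braid diagram: for each crossing, \<open>True\<close> = the
  vertical (identity) smoothing, \<open>False\<close> = the horizontal (cup-cap, \<open>e_i\<close>) smoothing.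
  Points \<open>(k,j)\<close>, \<open>k \<in> {0..m}\<close> level, \<open>j \<in> {1,2,3}\<close> strand position; the closure
  joins level \<open>m\<close> to level \<open>0\<close>.\<close>

definition state_points :: "nat \<Rightarrow> (nat \<times> nat) set" where
  "state_points m = {0..m} \<times> {1,2,3}"

definition state_edges :: "int list \<Rightarrow> bool list \<Rightarrow> ((nat \<times> nat) \<times> (nat \<times> nat)) set" where
  "state_edges w st =
     {((k, j), (Suc k, j)) | k j. k < length w \<and> j \<in> {1,2,3} \<and>
         (st ! k \<or> (j \<noteq> nat \<bar>w ! k\<bar> \<and> j \<noteq> nat \<bar>w ! k\<bar> + 1))}
   \<union> {((k, nat \<bar>w ! k\<bar>), (k, nat \<bar>w ! k\<bar> + 1)) | k. k < length w \<and> \<not> st ! k}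
   \<union> {((Suc k, nat \<bar>w ! k\<bar>), (Suc k, nat \<bar>w ! k\<bar> + 1)) | k. k < length w \<and> \<not> st ! k}
   \<union> {((length w, j), (0, j)) | j. j \<in> {1,2,3}}"

definition state_loops :: "int list \<Rightarrow> bool list \<Rightarrow> nat" where
  "state_loops w st =
     card (state_points (length w) // ((state_edges w st \<union> (state_edges w st)\<inverse>)\<^sup>*))"

definition smon :: "int \<Rightarrow> int fls" where
  "smon e = fls_shift (- e) 1"

text \<open>Loop value \<open>d = -A^2 - A^{-2} = -s - s^{-1}\<close>.\<close>
definition loop_val :: "int fls" where
  "loop_val = - fls_X - fls_X_inv"

text \<open>Jones polynomial of the closure via the Kauffman bracket
  \<open>V = (-A^{-3})^{w} \<Sum>_S A^{a(S)-b(S)} d^{loops(S)-1}\<close>, with \<open>A = s^{-1/2}\<close>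
  (i.e. \<open>A = q^{1/4}\<close>).  A positive crossing contributes \<open>A\<close> for the vertical and
  \<open>A^{-1}\<close> for the horizontal smoothing, a negative one the reverse. Combining with
  \<open>A^{-3 w}\<close>, each crossing of sign \<open>\<epsilon>\<close> contributes \<open>s^{\<epsilon>}\<close> (vertical) resp.
  \<open>s^{2\<epsilon>}\<close> (horizontal).\<close>
definition state_exp :: "int list \<Rightarrow> bool list \<Rightarrow> int" where
  "state_exp w st = (\<Sum>k<length w. crossing_sign (w ! k) * (if st ! k then 1 else 2))"

definition V3 :: "int list \<Rightarrow> int fls" where
  "V3 w = (-1) ^ nat \<bar>writhe w\<bar> *
     (\<Sum>st \<in> {st :: bool list. length st = length w}.
        smon (state_exp w st) * loop_val ^ (state_loops w st - 1))"

definition leading_term :: "int fls \<Rightarrow> int \<Rightarrow> int \<Rightarrow> bool" where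
  "leading_term p c n \<longleftrightarrow> c \<noteq> 0 \<and> fls_nth p n = c \<and> (\<forall>m > n. fls_nth p m = 0)"

end

theory Submission
  imports Defs
begin



definition Rl :: "('a \<times> 'a) set \<Rightarrow> ('a \<times> 'a) set" where
  "Rl E = (E \<union> E\<inverse>)\<^sup>*"

lemma Rl_sym: "(x,y) \<in> Rl E \<Longrightarrow> (y,x) \<in> Rl E"
  unfolding Rl_def by (metis converse_Un converse_converse rtrancl_converseI sup_commute)

lemma Rl_trans: "(x,y) \<in> Rl E \<Longrightarrow> (y,z) \<in> Rl E \<Longrightarrow> (x,z) \<in> Rl E"
  unfolding Rl_def by (rule rtrancl_trans)

lemma Rl_refl[simp]: "(x,x) \<in> Rl E"
  unfolding Rl_def by simp

lemma Rl_edge: "(x,y) \<in> E \<Longrightarrow> (x,y) \<in> Rl E"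
  unfolding Rl_def by auto

lemma Rl_edge': "(y,x) \<in> E \<Longrightarrow> (x,y) \<in> Rl E"
  unfolding Rl_def by auto

lemma Rl_mono: "E \<subseteq> E' \<Longrightarrow> Rl E \<subseteq> Rl E'"
  unfolding Rl_def by (intro rtrancl_mono) auto

lemma quot_img: "V // r = (\<lambda>x. r``{x}) ` V"
  by (auto simp: quotient_def)

lemma Rl_class_eq: "(x,y) \<in> Rl E \<Longrightarrow> Rl E `` {x} = Rl E `` {y}"
  by (auto intro: Rl_trans Rl_sym)

lemma card_reps:
  assumes "finite V" "\<And>p. p \<in> V \<Longrightarrow> (p, rep p) \<in> Rl E"
  shows "card (V // Rl E) \<le> card (rep ` V)"
proof -
  have "V // Rl E = (\<lambda>r. Rl E `` {r}) ` (rep ` V)"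
  proof -
    have "x \<in> V \<Longrightarrow> Rl E `` {x} = Rl E `` {rep x}" for x using Rl_class_eq[OF assms(2)] by blast
    thus ?thesis unfolding quot_img image_image by (intro image_cong) auto
  qed
  thus ?thesis using assms(1) by (simp add: card_image_le)
qed

lemma Rl_inv:
  assumes "\<forall>x y. (x,y) \<in> E \<longrightarrow> f x = f y" "(x,y) \<in> Rl E"
  shows "f x = f y"
  using assms(2) unfolding Rl_def
proof (induction rule: rtrancl_induct)
  case (step y z) then show ?case using assms(1) by auto
qed simp

lemma card_inv:
  assumes "finite V" "\<And>x y. (x,y) \<in> E \<Longrightarrow> f x = f y"
  shows "card (f ` V) \<le> card (V // Rl E)"
proof -
  have "f ` V \<subseteq> (\<lambda>X. f (SOME x. x \<in> X)) ` (V // Rl E)"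
  proof
    fix z assume "z \<in> f ` V"
    then obtain x where x: "x \<in> V" "z = f x" by auto
    have "x \<in> Rl E `` {x}" by simp
    hence "(SOME y. y \<in> Rl E `` {x}) \<in> Rl E `` {x}" by (rule someI)
    hence "(x, SOME y. y \<in> Rl E `` {x}) \<in> Rl E" by simp
    hence "f x = f (SOME y. y \<in> Rl E `` {x})" using assms(2) Rl_inv[of E f] by blast
    hence "f (SOME y. y \<in> Rl E `` {x}) = f x" by simp
    thus "z \<in> (\<lambda>X. f (SOME x. x \<in> X)) ` (V // Rl E)"
      using x by (auto simp: quot_img image_iff intro!: bexI[of _ x])
  qed
  moreover have "finite (V // Rl E)" using assms(1) by (simp add: quot_img)
  ultimately show ?thesis by (meson card_image_le card_mono finite_imageI order_trans)
qed

lemma card_mono_E: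
  assumes "finite V" "E \<subseteq> E'"
  shows "card (V // Rl E') \<le> card (V // Rl E)"
proof -
  have "V // Rl E' = (\<lambda>X. Rl E' `` X) ` (V // Rl E)"
  proof -
    have "Rl E' `` (Rl E `` {x}) = Rl E' `` {x}" for x
      using Rl_mono[OF assms(2)] by (auto intro: Rl_trans)
    thus ?thesis by (auto simp: quot_img image_iff)
  qed
  thus ?thesis using assms(1) by (simp add: card_image_le quot_img)
qed

lemma card_plus_one:
  assumes "finite V"
    and F: "\<And>y z. (y,z) \<in> F \<Longrightarrow> (y,z) \<in> Rl E \<or>
               (y \<in> Rl E``{a} \<union> Rl E``{b} \<and> z \<in> Rl E``{a} \<union> Rl E``{b})"
  shows "card (V // Rl E) \<le> card (V // Rl (E \<union> F)) + 1"
proof -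
  define S where "S = Rl E"
  define S' where "S' = Rl (E \<union> F)"
  define T where "T = S``{a} \<union> S``{b}"
  have Strans: "(x,y) \<in> S \<Longrightarrow> (y,z) \<in> S \<Longrightarrow> (x,z) \<in> S" for x y z
    unfolding S_def by (rule Rl_trans)
  have Ssym: "(x,y) \<in> S \<Longrightarrow> (y,x) \<in> S" for x y
    unfolding S_def by (rule Rl_sym)
  have Tcl: "y \<in> T \<Longrightarrow> (y,z) \<in> S \<Longrightarrow> z \<in> T" for y z
  proof -
    assume "y \<in> T" "(y,z) \<in> S"
    thus "z \<in> T" unfolding T_def using Strans by blast
  qed
  have Tcl': "y \<in> T \<Longrightarrow> (z,y) \<in> S \<Longrightarrow> z \<in> T" for y z
    using Tcl Ssym by blast
  have FF: "(y,z) \<in> F \<Longrightarrow> (y,z) \<in> S \<or> (y \<in> T \<and> z \<in> T)" for y z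
    using F[of y z] unfolding S_def T_def by blast
  have claim: "(x,y) \<in> S' \<Longrightarrow> (x,y) \<in> S \<or> (x \<in> T \<and> y \<in> T)" for x y
    unfolding S'_def Rl_def
  proof (induction rule: rtrancl_induct)
    case base then show ?case by (simp add: S_def)
  next
    case (step y z)
    have e: "(y,z) \<in> S \<or> (y \<in> T \<and> z \<in> T)"
    proof -
      from step.hyps(2) consider "(y,z) \<in> E" | "(z,y) \<in> E" | "(y,z) \<in> F" | "(z,y) \<in> F" by auto
      then show ?thesis
      proof cases
        case 1 then show ?thesis by (simp add: S_def Rl_edge)
      next
        case 2 then show ?thesis by (simp add: S_def Rl_edge')
      next
        case 3 then show ?thesis using FF by blast
      next
        case 4 then show ?thesis using FF[of z y] Ssym by blast
      qed
    qed
    show ?case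
    proof (cases "(x,y) \<in> S")
      case True
      show ?thesis
      proof (cases "(y,z) \<in> S")
        case True2: True
        show ?thesis using Strans[OF True True2] by blast
      next
        case False
        with e have "y \<in> T" "z \<in> T" by auto
        thus ?thesis using Tcl'[of y x] True by blast
      qed
    next
      case False
      with step.IH have xT: "x \<in> T" "y \<in> T" by auto
      show ?thesis
      proof (cases "(y,z) \<in> S")
        case True
        thus ?thesis using Tcl[of y z] xT by blast
      next
        case False
        with e xT show ?thesis by blast
      qed
    qed
  qed
  have SS: "S \<subseteq> S'" using Rl_mono[of E "E \<union> F"] unfolding S_def S'_def by auto
  have S'trans: "(x,y) \<in> S' \<Longrightarrow> (y,z) \<in> S' \<Longrightarrow> (x,z) \<in> S'" for x y z
    unfolding S'_def by (rule Rl_trans)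
  define Q where "Q = V // S"
  define g where "g X = S' `` X" for X
  have gS: "g (S `` {x}) = S' `` {x}" for x
  proof
    show "g (S `` {x}) \<subseteq> S' `` {x}" unfolding g_def using SS S'trans by blast
    show "S' `` {x} \<subseteq> g (S `` {x})" unfolding g_def
      using Rl_refl[of x E] unfolding S_def[symmetric] by blast
  qed
  have gimg: "g ` (Q - {S``{b}}) \<subseteq> V // S'"
  proof
    fix Z assume "Z \<in> g ` (Q - {S``{b}})"
    then obtain x where x: "x \<in> V" "Z = g (S `` {x})" by (auto simp: Q_def quot_img)
    thus "Z \<in> V // S'" using gS by (simp add: quot_img)
  qed
  have inj: "inj_on g (Q - {S``{b}})"
  proof (rule inj_onI)
    fix X Y assume X: "X \<in> Q - {S``{b}}" and Y: "Y \<in> Q - {S``{b}}" and gg: "g X = g Y"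
    obtain x where x: "x \<in> V" "X = S``{x}" using X by (auto simp: Q_def quot_img)
    obtain y where y: "y \<in> V" "Y = S``{y}" using Y by (auto simp: Q_def quot_img)
    have "S' `` {x} = S' `` {y}" using gg x y gS by simp
    moreover have "(y,y) \<in> S'" unfolding S'_def by simp
    ultimately have "(x,y) \<in> S'" by blast
    from claim[OF this] show "X = Y"
    proof
      assume "(x,y) \<in> S" thus ?thesis using x y unfolding S_def by (simp add: Rl_class_eq)
    next
      assume xyT: "x \<in> T \<and> y \<in> T"
      have cl: "z \<in> T \<Longrightarrow> S``{z} = S``{a} \<or> S``{z} = S``{b}" for z
      proof -
        assume "z \<in> T"
        hence "(a,z) \<in> S \<or> (b,z) \<in> S" unfolding T_def by blast
        thus ?thesis unfolding S_def using Rl_class_eq[of z a E] Rl_class_eq[of z b E] Rl_sym[of _ z E] by metis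
      qed
      have "X = S``{a} \<or> X = S``{b}" "Y = S``{a} \<or> Y = S``{b}"
        using cl xyT x y by auto
      thus ?thesis using X Y by auto
    qed
  qed
  have fQ: "finite Q" using assms(1) by (simp add: Q_def quot_img)
  have c1: "card Q \<le> card (Q - {S``{b}}) + 1"
    using fQ by (cases "S``{b} \<in> Q") (auto simp: card_Diff_singleton_if Suc_le_eq card_gt_0_iff)
  have c2: "card (Q - {S``{b}}) = card (g ` (Q - {S``{b}}))" using inj by (simp add: card_image)
  have c3: "card (g ` (Q - {S``{b}})) \<le> card (V // S')"
    using gimg assms(1) by (intro card_mono) (auto simp: quot_img)
  from c1 c2 c3 have "card Q \<le> card (V // S') + 1" by linarith
  thus ?thesis unfolding Q_def S_def S'_def .
qed




lemma lv_mult_nth: "fls_nth (loop_val * f) m = - fls_nth f (m - 1) - fls_nth f (m + 1)"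
  unfolding loop_val_def by (simp add: algebra_simps fls_X_times_conv_shift fls_X_inv_times_conv_shift)

lemma lv_pow_nth: "(m > int n \<longrightarrow> fls_nth (loop_val ^ n) m = 0) \<and> fls_nth (loop_val ^ n) (int n) = (-1)^n"
proof (induction n arbitrary: m)
  case 0 show ?case by simp
next
  case (Suc n)
  have a: "fls_nth (loop_val ^ Suc n) m = - fls_nth (loop_val ^ n) (m - 1) - fls_nth (loop_val ^ n) (m + 1)" for m
    by (simp add: lv_mult_nth)
  show ?case using Suc.IH a by (auto simp: a)
qed

lemma smon_mult_nth: "fls_nth (smon e * f) m = fls_nth f (m - e)"
  unfolding smon_def by (simp add: fls_shifted_times_simps)

lemma term_hi: "m > e + int n \<Longrightarrow> fls_nth (smon e * loop_val ^ n) m = 0"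
  using lv_pow_nth[of n "m - e"] by (simp add: smon_mult_nth)

lemma term_top: "fls_nth (smon e * loop_val ^ n) (e + int n) = (-1)^n"
  using lv_pow_nth[of n] by (simp add: smon_mult_nth)

lemma neg1_pow_nth: "fls_nth ((-1) ^ N * (f::int fls)) m = (-1) ^ N * fls_nth f m"
  by (cases "even N") (simp_all add: neg_one_even_power neg_one_odd_power)




lemma strand:
  assumes "\<And>k'. lo \<le> k' \<Longrightarrow> k' < hi \<Longrightarrow> ((k',j),(Suc k',j)) \<in> Rl E"
  shows "lo \<le> k \<Longrightarrow> k \<le> hi \<Longrightarrow> ((lo,j),(k,j)) \<in> Rl E"
proof (induction k)
  case 0 then show ?case by simp
next
  case (Suc k)
  show ?case
  proof (cases "lo = Suc k")
    case True then show ?thesis by simp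
  next
    case False
    hence "lo \<le> k" using Suc.prems by simp
    hence "((lo,j),(k,j)) \<in> Rl E" using Suc.IH Suc.prems by simp
    moreover have "((k,j),(Suc k,j)) \<in> Rl E" using assms \<open>lo \<le> k\<close> Suc.prems by simp
    ultimately show ?thesis by (rule Rl_trans)
  qed
qed

locale L =
  fixes a1 a2 a3 a4 :: nat
  assumes A1: "a1 \<ge> 2" and A2: "a2 \<ge> 2" and A3: "a3 \<ge> 2" and A4: "a4 \<ge> 2"
begin

definition wd :: "int list" where
  "wd = replicate a1 1 @ replicate a2 2 @ replicate a3 1 @ replicate a4 2"

definition gg :: "nat \<Rightarrow> nat" where
  "gg k = (if k < a1 then 1 else if k < a1+a2 then 2 else if k < a1+a2+a3 then 1 else 2)"

definition small :: "nat \<Rightarrow> bool" where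
  "small k \<longleftrightarrow> 0 < k \<and> k < a1+a2+a3+a4 \<and> k \<noteq> a1 \<and> k \<noteq> a1+a2 \<and> k \<noteq> a1+a2+a3"

lemma len_wd: "length wd = a1+a2+a3+a4"
  by (simp add: wd_def)

lemma wd_nth: "k < a1+a2+a3+a4 \<Longrightarrow> wd ! k = int (gg k)"
  by (auto simp: wd_def gg_def nth_append)

lemma nat_wd: "k < a1+a2+a3+a4 \<Longrightarrow> nat \<bar>wd ! k\<bar> = gg k"
  by (simp add: wd_nth)

lemma gg12: "gg k = 1 \<or> gg k = 2"
  by (simp add: gg_def)

lemma ev: "k < a1+a2+a3+a4 \<Longrightarrow> j \<in> {1,2,3} \<Longrightarrow> st!k \<or> (j \<noteq> gg k \<and> j \<noteq> Suc (gg k)) \<Longrightarrow>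
    ((k,j),(Suc k,j)) \<in> Rl (state_edges wd st)"
  apply (rule Rl_edge)
  unfolding state_edges_def by (auto simp: len_wd nat_wd)

lemma ecapt: "k < a1+a2+a3+a4 \<Longrightarrow> \<not> st!k \<Longrightarrow>
    ((k,gg k),(k,Suc (gg k))) \<in> Rl (state_edges wd st)"
  apply (rule Rl_edge)
  unfolding state_edges_def by (auto simp: len_wd nat_wd)

lemma ecapb: "k < a1+a2+a3+a4 \<Longrightarrow> \<not> st!k \<Longrightarrow>
    ((Suc k,gg k),(Suc k,Suc (gg k))) \<in> Rl (state_edges wd st)"
  apply (rule Rl_edge)
  unfolding state_edges_def by (auto simp: len_wd nat_wd)

lemma eclo: "j \<in> {1,2,3} \<Longrightarrow> ((a1+a2+a3+a4,j),(0,j)) \<in> Rl (state_edges wd st)"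
  apply (rule Rl_edge)
  unfolding state_edges_def by (auto simp: len_wd)


lemma topcap: "k < a1+a2+a3+a4 \<Longrightarrow> \<forall>k'<a1+a2+a3+a4. st!k' \<longrightarrow> k' = k0 \<Longrightarrow>
   Suc k < a1+a2+a3+a4 \<Longrightarrow> gg (Suc k) = gg k \<Longrightarrow>
   ((k,gg k),(k,Suc (gg k))) \<in> Rl (state_edges wd st)"
proof (cases "st!k")
  case False
  assume "k < a1+a2+a3+a4" thus ?thesis using ecapt False by blast
next
  case True
  assume a: "k < a1+a2+a3+a4" "\<forall>k'<a1+a2+a3+a4. st!k' \<longrightarrow> k' = k0"
     "Suc k < a1+a2+a3+a4" "gg (Suc k) = gg k"
  have ns: "\<not> st ! Suc k" using a(2)[rule_format, OF a(1) True] a(2)[rule_format, OF a(3)] by auto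
  have g: "gg k \<in> {1,2,3}" "Suc (gg k) \<in> {1,2,3}" using gg12[of k] by auto
  have 1: "((k,gg k),(Suc k,gg k)) \<in> Rl (state_edges wd st)" using ev[OF a(1) g(1)] True by blast
  have 2: "((Suc k,gg k),(Suc k,Suc (gg k))) \<in> Rl (state_edges wd st)"
    using ecapt[OF a(3) ns] a(4) by simp
  have 3: "((Suc k,Suc (gg k)),(k,Suc (gg k))) \<in> Rl (state_edges wd st)"
    using ev[OF a(1) g(2)] True by (blast intro: Rl_sym)
  show ?thesis using Rl_trans[OF Rl_trans[OF 1 2] 3] .
qed

lemma botcap: "k < a1+a2+a3+a4 \<Longrightarrow> \<forall>k'<a1+a2+a3+a4. st!k' \<longrightarrow> k' = k0 \<Longrightarrow>
   0 < k \<Longrightarrow> gg (k - 1) = gg k \<Longrightarrow>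
   ((Suc k,gg k),(Suc k,Suc (gg k))) \<in> Rl (state_edges wd st)"
proof (cases "st!k")
  case False
  assume "k < a1+a2+a3+a4" thus ?thesis using ecapb False by blast
next
  case True
  assume a: "k < a1+a2+a3+a4" "\<forall>k'<a1+a2+a3+a4. st!k' \<longrightarrow> k' = k0"
     "0 < k" "gg (k - 1) = gg k"
  have km1: "k - 1 < a1+a2+a3+a4" using a(1) by simp
  have ns: "\<not> st ! (k - 1)" using a(2)[rule_format, OF a(1) True] a(2)[rule_format, OF km1] a(3) by auto
  have km: "k - 1 < a1+a2+a3+a4" "Suc (k - 1) = k" using a by auto
  have g: "gg k \<in> {1,2,3}" "Suc (gg k) \<in> {1,2,3}" using gg12[of k] by auto
  have 1: "((Suc k,gg k),(k,gg k)) \<in> Rl (state_edges wd st)" using ev[OF a(1) g(1)] True by (blast intro: Rl_sym)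
  have 2: "((k,gg k),(k,Suc (gg k))) \<in> Rl (state_edges wd st)"
    using ecapb[OF km(1) ns] a(4) km(2) by simp
  have 3: "((k,Suc (gg k)),(Suc k,Suc (gg k))) \<in> Rl (state_edges wd st)"
    using ev[OF a(1) g(2)] True by blast
  show ?thesis using Rl_trans[OF Rl_trans[OF 1 2] 3] .
qed

lemma hub:
  assumes OT: "\<forall>k'<a1+a2+a3+a4. st!k' \<longrightarrow> k' = k0"
    and k: "k \<le> a1+a2+a3+a4" and j: "j \<in> {1,2,3}"
    and ns: "\<not> (small k \<and> (j = gg k \<or> j = Suc (gg k)))"
  shows "((k,j),(0,1)) \<in> Rl (state_edges wd st)"
proof -
  define R where "R = Rl (state_edges wd st)"
  note AA = A1 A2 A3 A4
  let ?D = "a1+a2+a3+a4"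
  have tr: "(x,y) \<in> R \<Longrightarrow> (y,z) \<in> R \<Longrightarrow> (x,z) \<in> R" for x y z unfolding R_def by (rule Rl_trans)
  have sy: "(x,y) \<in> R \<Longrightarrow> (y,x) \<in> R" for x y unfolding R_def by (rule Rl_sym)
  have thirdv: "k' < ?D \<Longrightarrow> j' \<in> {1,2,3} \<Longrightarrow> j' \<noteq> gg k' \<Longrightarrow> j' \<noteq> Suc (gg k') \<Longrightarrow> ((k',j'),(Suc k',j')) \<in> R" for k' j'
    unfolding R_def using ev by blast
  have c01: "((0,1),(0,1)) \<in> R" unfolding R_def by simp
  have c02: "((0,2),(0,1)) \<in> R"
  proof -
    have "((0,gg 0),(0,Suc (gg 0))) \<in> R" unfolding R_def
      by (rule topcap[OF _ OT]) (use AA in \<open>auto simp: gg_def\<close>)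
    moreover have "gg 0 = 1" using AA by (simp add: gg_def)
    ultimately show ?thesis using sy by (simp add: numeral_2_eq_2)
  qed
  have cD1: "((?D,1),(0,1)) \<in> R" unfolding R_def by (rule eclo) simp
  have cD2: "((?D,2),(0,1)) \<in> R"
  proof -
    have "((?D,2),(0,2)) \<in> R" unfolding R_def by (rule eclo) simp
    thus ?thesis using tr c02 by blast
  qed
  have cD3: "((?D,3),(0,1)) \<in> R"
  proof -
    have "((Suc (?D - 1),gg (?D - 1)),(Suc (?D - 1),Suc (gg (?D - 1)))) \<in> R" unfolding R_def
      by (rule botcap[OF _ OT]) (use AA in \<open>auto simp: gg_def\<close>)
    moreover have "gg (?D - 1) = 2" "Suc (?D - 1) = ?D" using AA by (auto simp: gg_def)
    ultimately have "((?D,2),(?D,3)) \<in> R" by simp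
    from tr[OF sy[OF this] cD2] show ?thesis .
  qed
  have c03: "((0,3),(0,1)) \<in> R"
  proof -
    have "((?D,3),(0,3)) \<in> R" unfolding R_def by (rule eclo) simp
    from tr[OF sy[OF this] cD3] show ?thesis .
  qed
  have b1: "k' \<le> a1 \<Longrightarrow> ((k',3),(0,1)) \<in> R" for k'
  proof -
    assume "k' \<le> a1"
    have "((0,3),(k',3)) \<in> R" unfolding R_def
      by (rule strand[of 0 a1 3 _ k']) (use AA \<open>k' \<le> a1\<close> in \<open>auto intro!: thirdv[unfolded R_def] simp: gg_def\<close>)
    from tr[OF sy[OF this] c03] show ?thesis .
  qed
  have b1a: "((a1,3),(0,1)) \<in> R" using b1 by simp
  have la1: "((a1,2),(0,1)) \<in> R" "((a1,1),(0,1)) \<in> R"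
  proof -
    have "((a1,gg a1),(a1,Suc (gg a1))) \<in> R" unfolding R_def
      by (rule topcap[OF _ OT]) (use AA in \<open>auto simp: gg_def\<close>)
    moreover have "gg a1 = 2" using AA by (simp add: gg_def)
    ultimately have x: "((a1,2),(a1,3)) \<in> R" by simp
    from tr[OF x b1a] show x2: "((a1,2),(0,1)) \<in> R" .
    have "((Suc (a1 - 1),gg (a1 - 1)),(Suc (a1 - 1),Suc (gg (a1 - 1)))) \<in> R" unfolding R_def
      by (rule botcap[OF _ OT]) (use AA in \<open>auto simp: gg_def\<close>)
    moreover have "gg (a1 - 1) = 1" "Suc (a1 - 1) = a1" using AA by (auto simp: gg_def)
    ultimately have "((a1,1),(a1,2)) \<in> R" by (simp add: numeral_2_eq_2)
    from tr[OF this x2] show "((a1,1),(0,1)) \<in> R" .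
  qed
  have b2: "a1 \<le> k' \<Longrightarrow> k' \<le> a1+a2 \<Longrightarrow> ((k',1),(0,1)) \<in> R" for k'
  proof -
    assume "a1 \<le> k'" "k' \<le> a1+a2"
    have "((a1,1),(k',1)) \<in> R" unfolding R_def
      by (rule strand[of a1 "a1+a2" 1 _ k']) (use AA \<open>a1 \<le> k'\<close> \<open>k' \<le> a1+a2\<close> in \<open>auto intro!: thirdv[unfolded R_def] simp: gg_def\<close>)
    from tr[OF sy[OF this] la1(2)] show ?thesis .
  qed
  have b2a: "((a1+a2,1),(0,1)) \<in> R" using b2 by simp
  have la2: "((a1+a2,2),(0,1)) \<in> R" "((a1+a2,3),(0,1)) \<in> R"
  proof -
    have "((a1+a2,gg (a1+a2)),(a1+a2,Suc (gg (a1+a2)))) \<in> R" unfolding R_def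
      by (rule topcap[OF _ OT]) (use AA in \<open>auto simp: gg_def\<close>)
    moreover have "gg (a1+a2) = 1" using AA by (simp add: gg_def)
    ultimately have x: "((a1+a2,1),(a1+a2,2)) \<in> R" by (simp add: numeral_2_eq_2)
    from tr[OF sy[OF x] b2a] show x2: "((a1+a2,2),(0,1)) \<in> R" .
    have "((Suc (a1+a2 - 1),gg (a1+a2 - 1)),(Suc (a1+a2 - 1),Suc (gg (a1+a2 - 1)))) \<in> R" unfolding R_def
      by (rule botcap[OF _ OT]) (use AA in \<open>auto simp: gg_def\<close>)
    moreover have "gg (a1+a2 - 1) = 2" "Suc (a1+a2 - 1) = a1+a2" using AA by (auto simp: gg_def)
    ultimately have "((a1+a2,2),(a1+a2,3)) \<in> R" by simp
    from tr[OF sy[OF this] x2] show "((a1+a2,3),(0,1)) \<in> R" .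
  qed
  have b3: "a1+a2 \<le> k' \<Longrightarrow> k' \<le> a1+a2+a3 \<Longrightarrow> ((k',3),(0,1)) \<in> R" for k'
  proof -
    assume "a1+a2 \<le> k'" "k' \<le> a1+a2+a3"
    have "((a1+a2,3),(k',3)) \<in> R" unfolding R_def
      by (rule strand[of "a1+a2" "a1+a2+a3" 3 _ k']) (use AA \<open>a1+a2 \<le> k'\<close> \<open>k' \<le> a1+a2+a3\<close> in \<open>auto intro!: thirdv[unfolded R_def] simp: gg_def\<close>)
    from tr[OF sy[OF this] la2(2)] show ?thesis .
  qed
  have b3a: "((a1+a2+a3,3),(0,1)) \<in> R" using b3 by simp
  have la3: "((a1+a2+a3,2),(0,1)) \<in> R" "((a1+a2+a3,1),(0,1)) \<in> R"
  proof -
    have "((a1+a2+a3,gg (a1+a2+a3)),(a1+a2+a3,Suc (gg (a1+a2+a3)))) \<in> R" unfolding R_def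
      by (rule topcap[OF _ OT]) (use AA in \<open>auto simp: gg_def\<close>)
    moreover have "gg (a1+a2+a3) = 2" using AA by (simp add: gg_def)
    ultimately have x: "((a1+a2+a3,2),(a1+a2+a3,3)) \<in> R" by simp
    from tr[OF x b3a] show x2: "((a1+a2+a3,2),(0,1)) \<in> R" .
    have "((Suc (a1+a2+a3 - 1),gg (a1+a2+a3 - 1)),(Suc (a1+a2+a3 - 1),Suc (gg (a1+a2+a3 - 1)))) \<in> R" unfolding R_def
      by (rule botcap[OF _ OT]) (use AA in \<open>auto simp: gg_def\<close>)
    moreover have "gg (a1+a2+a3 - 1) = 1" "Suc (a1+a2+a3 - 1) = a1+a2+a3" using AA by (auto simp: gg_def)
    ultimately have "((a1+a2+a3,1),(a1+a2+a3,2)) \<in> R" by (simp add: numeral_2_eq_2)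
    from tr[OF this x2] show "((a1+a2+a3,1),(0,1)) \<in> R" .
  qed
  have b4: "a1+a2+a3 \<le> k' \<Longrightarrow> k' \<le> ?D \<Longrightarrow> ((k',1),(0,1)) \<in> R" for k'
  proof -
    assume "a1+a2+a3 \<le> k'" "k' \<le> ?D"
    have "((a1+a2+a3,1),(k',1)) \<in> R" unfolding R_def
      by (rule strand[of "a1+a2+a3" ?D 1 _ k']) (use AA \<open>a1+a2+a3 \<le> k'\<close> \<open>k' \<le> ?D\<close> in \<open>auto intro!: thirdv[unfolded R_def] simp: gg_def\<close>)
    from tr[OF sy[OF this] la3(2)] show ?thesis .
  qed
  show ?thesis
  proof (cases "small k")
    case True
    hence jj: "j \<noteq> gg k" "j \<noteq> Suc (gg k)" using ns by auto
    show ?thesis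
    proof (cases "k < a1")
      case True
      then have "j = 3" using jj j by (auto simp: gg_def)
      thus ?thesis using b1 True by (simp add: R_def)
    next
      case F1: False
      show ?thesis
      proof (cases "k < a1+a2")
        case True
        then have "j = 1" using jj j F1 by (auto simp: gg_def)
        thus ?thesis using b2 True F1 by (simp add: R_def)
      next
        case F2: False
        show ?thesis
        proof (cases "k < a1+a2+a3")
          case True
          then have "j = 3" using jj j F1 F2 by (auto simp: gg_def)
          thus ?thesis using b3 True F2 by (simp add: R_def)
        next
          case F3: False
          then have "j = 1" using jj j F1 F2 by (auto simp: gg_def)
          thus ?thesis using b4 F3 k by (simp add: R_def)
        qed
      qed
    qed
  next
    case False
    hence "k = 0 \<or> k = ?D \<or> k = a1 \<or> k = a1+a2 \<or> k = a1+a2+a3" using k by (auto simp: small_def)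
    thus ?thesis
      using j c01 c02 c03 cD1 cD2 cD3 la1 la2 la3 b1a b2a b3a by (auto simp: R_def)
  qed
qed

end




context L begin

abbreviation DD where "DD \<equiv> a1+a2+a3+a4"

lemma loops_eq: "state_loops wd st = card (({0..DD} \<times> {1,2,3}) // Rl (state_edges wd st))"
  by (simp add: state_loops_def state_points_def Rl_def len_wd)

lemma finV: "finite ({0..DD} \<times> {1::nat,2,3})" by simp

lemma small_gg: "small (Suc k) \<Longrightarrow> gg (Suc k) = gg k"
  by (auto simp: small_def gg_def)

lemma gg_pos[simp]: "0 < gg k" "gg k \<noteq> 0"
  by (auto simp: gg_def)

lemma small_lt: "small k \<Longrightarrow> k < DD"
  by (simp add: small_def)

lemma notsmall_next: "k0 < DD \<Longrightarrow> \<not> small k0 \<Longrightarrow> small (Suc k0)"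
  using A1 A2 A3 A4 by (auto simp: small_def)

lemma card_small: "card {k. small k} = DD - 4"
proof -
  have e: "{k. small k} = {1..<DD} - {a1, a1+a2, a1+a2+a3}"
    by (auto simp: small_def)
  have s: "{a1, a1+a2, a1+a2+a3} \<subseteq> {1..<DD}" using A1 A2 A3 A4 by auto
  have c: "card {a1, a1+a2, a1+a2+a3} = 3" using A1 A2 A3 A4 by auto
  show ?thesis unfolding e using s c by (simp add: card_Diff_subset)
qed

lemma fin_small: "finite {k. small k}"
  using small_lt by (metis finite_nat_set_iff_bounded mem_Collect_eq)

lemma L0: "state_loops wd (replicate DD False) = DD - 3"
proof -
  let ?st = "replicate DD False"
  let ?V = "{0..DD} \<times> {1::nat,2,3}"
  let ?E = "state_edges wd ?st"
  define rep0 where "rep0 p = (if small (fst p) \<and> (snd p = gg (fst p) \<or> snd p = Suc (gg (fst p))) then (fst p, gg (fst p)) else (0::nat,1::nat))" for p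
  define f0 where "f0 p = (if small (fst p) \<and> (snd p = gg (fst p) \<or> snd p = Suc (gg (fst p))) then fst p else 0)" for p :: "nat \<times> nat"
  have OT: "\<forall>k'<DD. ?st!k' \<longrightarrow> k' = 0" by simp
  have reps: "(p, rep0 p) \<in> Rl ?E" if "p \<in> ?V" for p
  proof -
    obtain k j where p: "p = (k,j)" by (cases p)
    have k: "k \<le> DD" and j: "j \<in> {1,2,3}" using that p by auto
    show ?thesis
    proof (cases "small k \<and> (j = gg k \<or> j = Suc (gg k))")
      case True
      have "((k, gg k), (k, Suc (gg k))) \<in> Rl ?E"
        using ecapt[of k ?st] small_lt True by simp
      then show ?thesis using True p rep0_def Rl_sym by (auto simp: rep0_def)
    next
      case False
      have "rep0 p = (0,1)" using False p unfolding rep0_def by auto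
      then show ?thesis using hub[OF OT k j False] p by simp
    qed
  qed
  have up1: "card (?V // Rl ?E) \<le> card (rep0 ` ?V)" by (rule card_reps[OF finV reps])
  have "rep0 ` ?V \<subseteq> insert (0,1) ((\<lambda>k. (k, gg k)) ` {k. small k})"
    by (auto simp: rep0_def)
  hence "card (rep0 ` ?V) \<le> card (insert (0,1) ((\<lambda>k. (k, gg k)) ` {k. small k}))"
    using fin_small by (intro card_mono) auto
  also have "\<dots> \<le> Suc (card ((\<lambda>k. (k, gg k)) ` {k. small k}))"
    using fin_small by (simp add: card_insert_if)
  also have "\<dots> \<le> Suc (card {k. small k})"
    using fin_small card_image_le by auto
  finally have up: "card (?V // Rl ?E) \<le> DD - 3" using up1 card_small A1 A2 A3 A4 by linarith
  have inv: "f0 x = f0 y" if "(x,y) \<in> ?E" for x y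
  proof -
    from that consider
        (v) k j where "x = (k,j)" "y = (Suc k,j)" "k < DD" "j \<in> {1,2,3}" "?st!k \<or> (j \<noteq> gg k \<and> j \<noteq> Suc (gg k))"
      | (t) k where "x = (k, gg k)" "y = (k, Suc (gg k))" "k < DD"
      | (b) k where "x = (Suc k, gg k)" "y = (Suc k, Suc (gg k))" "k < DD"
      | (c) j where "x = (DD, j)" "y = (0, j)"
      unfolding state_edges_def len_wd by (auto simp: nat_wd)
    then show ?thesis
    proof cases
      case v
      then show ?thesis using small_gg[of k] by (auto simp: f0_def)
    next
      case t then show ?thesis by (simp add: f0_def)
    next
      case b then show ?thesis using small_gg[of k] by (auto simp: f0_def)
    next
      case c then show ?thesis by (simp add: f0_def small_def)
    qed
  qed
  have lo1: "card (f0 ` ?V) \<le> card (?V // Rl ?E)" by (rule card_inv[OF finV inv])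
  have "insert 0 {k. small k} \<subseteq> f0 ` ?V"
  proof
    fix k assume "k \<in> insert 0 {k. small k}"
    then consider "k = 0" | "small k" by auto
    then show "k \<in> f0 ` ?V"
    proof cases
      case 1 then show ?thesis by (auto simp: f0_def small_def image_iff intro!: bexI[of _ "(0,1)"])
    next
      case 2
      have "(k, gg k) \<in> ?V" using small_lt[OF 2] gg12[of k] by auto
      moreover have "f0 (k, gg k) = k" using 2 by (simp add: f0_def)
      ultimately show ?thesis by force
    qed
  qed
  hence "card (insert 0 {k. small k}) \<le> card (f0 ` ?V)" by (intro card_mono) auto
  moreover have "card (insert 0 {k. small k}) = Suc (DD - 4)"
    using fin_small card_small by (simp add: small_def)
  ultimately have lo: "DD - 3 \<le> card (?V // Rl ?E)" using lo1 A1 A2 A3 A4 by linarith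
  show ?thesis unfolding loops_eq using up lo by linarith
qed

end



context L begin

lemma L1:
  assumes k0: "k0 < DD"
  shows "state_loops wd ((replicate DD False)[k0 := True]) \<le> DD - 4"
proof -
  let ?st = "(replicate DD False)[k0 := True]"
  let ?V = "{0..DD} \<times> {1::nat,2,3}"
  let ?E = "state_edges wd ?st"
  have stn: "k < DD \<Longrightarrow> ?st ! k = (k = k0)" for k using k0 by (auto simp: nth_list_update)
  have OT: "\<forall>k'<DD. ?st!k' \<longrightarrow> k' = k0" using stn by auto
  define mI where "mI = (if small k0 then k0 else Suc k0)"
  have smI: "small mI" using notsmall_next[OF k0] by (auto simp: mI_def)
  define rep1 where "rep1 p = (if small (fst p) \<and> (snd p = gg (fst p) \<or> snd p = Suc (gg (fst p)))
     then (if fst p = k0 then (if small (Suc k0) then (Suc k0, gg (Suc k0)) else (0,1))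
           else if fst p = Suc k0 \<and> \<not> small k0 then (0,1) else (fst p, gg (fst p)))
     else (0::nat,1::nat))" for p
  have reps: "(p, rep1 p) \<in> Rl ?E" if "p \<in> ?V" for p
  proof -
    obtain k j where p: "p = (k,j)" by (cases p)
    have k: "k \<le> DD" and j: "j \<in> {1,2,3}" using that p by auto
    show ?thesis
    proof (cases "small k \<and> (j = gg k \<or> j = Suc (gg k))")
      case False
      have "rep1 p = (0,1)" using False p unfolding rep1_def by auto
      then show ?thesis using hub[OF OT k j False] p by simp
    next
      case True
      have kD: "k < DD" using True small_lt by blast
      have gk: "gg k \<in> {1,2,3}" "Suc (gg k) \<in> {1,2,3}" using gg12[of k] by auto
      show ?thesis
      proof (cases "k = k0")
        case kk: True
        have ns: "\<not> ?st ! (k - 1)" using stn[of "k - 1"] kD kk True by (auto simp: small_def)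
        have km: "k - 1 < DD" "Suc (k - 1) = k" using kD True by (auto simp: small_def)
        have gm: "gg (k - 1) = gg k" using small_gg[of "k - 1"] km True by simp
        have c1: "((k, gg k), (k, Suc (gg k))) \<in> Rl ?E"
          using ecapb[OF km(1) ns] km(2) gm by simp
        have c0: "((k,j),(k,gg k)) \<in> Rl ?E" using True c1 Rl_sym by auto
        have v: "((k, gg k), (Suc k, gg k)) \<in> Rl ?E" using ev[OF kD gk(1)] stn[OF kD] kk by simp
        have c2: "((k,j),(Suc k, gg k)) \<in> Rl ?E" by (rule Rl_trans[OF c0 v])
        show ?thesis
        proof (cases "small (Suc k0)")
          case True
          have "rep1 p = (Suc k0, gg (Suc k0))" using True \<open>small k \<and> _\<close> kk p unfolding rep1_def by auto
          moreover have "gg (Suc k0) = gg k0" using small_gg True by simp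
          ultimately show ?thesis using c2 kk p by simp
        next
          case False
          have r: "rep1 p = (0,1)" using False \<open>small k \<and> _\<close> kk p unfolding rep1_def by auto
          have "((Suc k, gg k), (0,1)) \<in> Rl ?E"
            by (rule hub[OF OT]) (use kD gk False kk in auto)
          then show ?thesis using Rl_trans[OF c2] r p by simp
        qed
      next
        case nk: False
        have c1: "((k, gg k), (k, Suc (gg k))) \<in> Rl ?E"
          using ecapt[OF kD] stn[OF kD] nk by simp
        have c0: "((k,j),(k,gg k)) \<in> Rl ?E" using True c1 Rl_sym by auto
        show ?thesis
        proof (cases "k = Suc k0 \<and> \<not> small k0")
          case True
          have r: "rep1 p = (0,1)" using True \<open>small k \<and> _\<close> nk p unfolding rep1_def by auto
          have g: "gg k = gg k0" using small_gg[of k0] True \<open>small k \<and> _\<close> by auto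
          have g0: "gg k0 \<in> {1,2,3}" using gg12[of k0] by auto
          have v: "((k0, gg k0), (Suc k0, gg k0)) \<in> Rl ?E" using ev[OF k0 g0] stn[OF k0] by simp
          have h: "((k0, gg k0), (0,1)) \<in> Rl ?E"
            by (rule hub[OF OT]) (use k0 g0 True in auto)
          have c0': "((k,j),(Suc k0, gg k0)) \<in> Rl ?E" using c0 True g by simp
          have "((k,j),(0,1)) \<in> Rl ?E"
            using Rl_trans[OF Rl_trans[OF c0' Rl_sym[OF v]] h] .
          then show ?thesis using r p by simp
        next
          case False
          have "rep1 p = (k, gg k)" using False \<open>small k \<and> _\<close> nk p unfolding rep1_def by auto
          then show ?thesis using c0 p by simp
        qed
      qed
    qed
  qed
  have up1: "card (?V // Rl ?E) \<le> card (rep1 ` ?V)" by (rule card_reps[OF finV reps])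
  have "rep1 ` ?V \<subseteq> insert (0,1) ((\<lambda>k. (k, gg k)) ` ({k. small k} - {mI}))"
  proof
    fix z assume "z \<in> rep1 ` ?V"
    then obtain k j where z: "z = rep1 (k,j)" by auto
    let ?T = "insert (0,1) ((\<lambda>k. (k, gg k)) ` ({k. small k} - {mI}))"
    show "z \<in> ?T"
    proof (cases "small k \<and> (j = gg k \<or> j = Suc (gg k))")
      case False
      then have "z = (0,1)" using z unfolding rep1_def by auto
      then show ?thesis by simp
    next
      case True
      show ?thesis
      proof (cases "k = k0")
        case kk: True
        show ?thesis
        proof (cases "small (Suc k0)")
          case True
          have "z = (Suc k0, gg (Suc k0))" using z True \<open>small k \<and> _\<close> kk unfolding rep1_def by auto
          moreover have "Suc k0 \<in> {k. small k} - {mI}" using True \<open>small k \<and> _\<close> kk by (simp add: mI_def)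
          ultimately show ?thesis by blast
        next
          case False
          have "z = (0,1)" using z False \<open>small k \<and> _\<close> kk unfolding rep1_def by auto
          then show ?thesis by simp
        qed
      next
        case nk: False
        show ?thesis
        proof (cases "k = Suc k0 \<and> \<not> small k0")
          case True
          have "z = (0,1)" using z True \<open>small k \<and> _\<close> nk unfolding rep1_def by auto
          then show ?thesis by simp
        next
          case False
          have "z = (k, gg k)" using z False \<open>small k \<and> _\<close> nk unfolding rep1_def by auto
          moreover have "k \<in> {k. small k} - {mI}" using False \<open>small k \<and> _\<close> nk by (auto simp: mI_def)
          ultimately show ?thesis by blast
        qed
      qed
    qed
  qed
  hence "card (rep1 ` ?V) \<le> card (insert (0,1) ((\<lambda>k. (k, gg k)) ` ({k. small k} - {mI})))"
    using fin_small by (intro card_mono) auto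
  also have "\<dots> \<le> Suc (card ((\<lambda>k. (k, gg k)) ` ({k. small k} - {mI})))"
    using fin_small by (simp add: card_insert_if)
  also have "\<dots> \<le> Suc (card ({k. small k} - {mI}))"
    using fin_small card_image_le by auto
  also have "\<dots> = Suc (DD - 4 - 1)" using smI fin_small card_small by (simp add: card_Diff_singleton)
  finally have up: "card (?V // Rl ?E) \<le> DD - 4" using up1 A1 A2 A3 A4 by linarith
  show ?thesis unfolding loops_eq using up .
qed

end



lemma sum_12: "(\<Sum>k<n. (if P k then 1 else 2::int)) = 2 * int n - int (card {k. k < n \<and> P k})"
proof (induction n)
  case 0 then show ?case by simp
next
  case (Suc n)
  have fin: "finite {k. k < n \<and> P k}" by simp
  have nn: "n \<notin> {k. k < n \<and> P k}" by simp
  have e: "{k. k < Suc n \<and> P k} = (if P n then insert n {k. k < n \<and> P k} else {k. k < n \<and> P k})"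
    by (auto simp: less_Suc_eq)
  show ?case using Suc.IH fin nn by (simp add: e)
qed

context L begin

lemma LA:
  assumes len: "length st = DD" and k: "k < DD" and sk: "st!k"
  shows "state_loops wd st \<le> state_loops wd (st[k := False]) + 1"
proof -
  let ?V = "{0..DD} \<times> {1::nat,2,3}"
  let ?st' = "st[k := False]"
  let ?E = "state_edges wd st"
  let ?E' = "state_edges wd ?st'"
  have stn: "?st' ! k' = (if k' = k then False else st ! k')" for k' using k len by (auto simp: nth_list_update)
  have gk: "gg k \<in> {1,2,3}" "Suc (gg k) \<in> {1,2,3}" using gg12[of k] by auto
  have cond: "(y,z) \<in> Rl ?E \<or> (y \<in> Rl ?E``{(k, gg k)} \<union> Rl ?E``{(k, Suc (gg k))} \<and>
                   z \<in> Rl ?E``{(k, gg k)} \<union> Rl ?E``{(k, Suc (gg k))})" if yz: "(y,z) \<in> ?E'" for y z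
  proof -
    from yz consider
        (v) k' j where "y = (k',j)" "z = (Suc k',j)" "k' < DD" "j \<in> {1,2,3}" "?st'!k' \<or> (j \<noteq> gg k' \<and> j \<noteq> Suc (gg k'))"
      | (t) k' where "y = (k', gg k')" "z = (k', Suc (gg k'))" "k' < DD" "\<not> ?st'!k'"
      | (b) k' where "y = (Suc k', gg k')" "z = (Suc k', Suc (gg k'))" "k' < DD" "\<not> ?st'!k'"
      | (c) j where "y = (DD, j)" "z = (0, j)" "j \<in> {1,2,3}"
      unfolding state_edges_def len_wd by (auto simp: nat_wd)
    then show ?thesis
    proof cases
      case v
      have "st!k' \<or> (j \<noteq> gg k' \<and> j \<noteq> Suc (gg k'))" using v(5) stn[of k'] by (auto split: if_splits)
      then show ?thesis using ev[OF v(3) v(4)] v by simp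
    next
      case t
      show ?thesis
      proof (cases "k' = k")
        case True then show ?thesis using t by auto
      next
        case False
        then have "\<not> st!k'" using t stn[of k'] by simp
        then show ?thesis using ecapt[OF t(3)] t by simp
      qed
    next
      case b
      show ?thesis
      proof (cases "k' = k")
        case True
        have 1: "((k, gg k), y) \<in> Rl ?E" using ev[OF k gk(1)] sk b True by simp
        have 2: "((k, Suc (gg k)), z) \<in> Rl ?E" using ev[OF k gk(2)] sk b True by simp
        show ?thesis using 1 2 by blast
      next
        case False
        then have "\<not> st!k'" using b stn[of k'] by simp
        then show ?thesis using ecapb[OF b(3)] b by simp
      qed
    next
      case c then show ?thesis using eclo by simp
    qed
  qed
  have cp: "card (?V // Rl ?E) \<le> card (?V // Rl (?E \<union> ?E')) + 1"
    by (rule card_plus_one[OF finV cond])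
  have mono: "card (?V // Rl (?E \<union> ?E')) \<le> card (?V // Rl ?E')"
    by (rule card_mono_E[OF finV]) auto
  show ?thesis unfolding loops_eq using cp mono by linarith
qed

definition cnt :: "bool list \<Rightarrow> nat" where
  "cnt st = card {k. k < DD \<and> st!k}"

lemma MB_aux:
  assumes k0: "k0 < DD"
  shows "\<forall>st. length st = DD \<longrightarrow> st!k0 \<longrightarrow> card {k. k < DD \<and> k \<noteq> k0 \<and> st!k} = n \<longrightarrow>
           state_loops wd st + 5 \<le> DD + cnt st"
proof (induction n)
  case 0
  show ?case
  proof (intro allI impI)
    fix st :: "bool list"
    assume len: "length st = DD" and s0: "st!k0" and c: "card {k. k < DD \<and> k \<noteq> k0 \<and> st!k} = 0"
    have emp: "{k. k < DD \<and> k \<noteq> k0 \<and> st!k} = {}" using c by (simp add: card_eq_0_iff)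
    have eq: "st = (replicate DD False)[k0 := True]"
    proof (rule nth_equalityI)
      show "length st = length ((replicate DD False)[k0 := True])" using len by simp
      fix i assume "i < length st"
      then show "st ! i = (replicate DD False)[k0 := True] ! i"
        using emp s0 len k0 by (auto simp: nth_list_update)
    qed
    have cst: "{k. k < DD \<and> st!k} = {k0}" using emp s0 k0 by auto
    have "state_loops wd st \<le> DD - 4" using L1[OF k0] eq by simp
    then show "state_loops wd st + 5 \<le> DD + cnt st" using cst A1 A2 A3 A4 by (simp add: cnt_def)
  qed
next
  case (Suc n)
  show ?case
  proof (intro allI impI)
    fix st :: "bool list"
    assume len: "length st = DD" and s0: "st!k0" and c: "card {k. k < DD \<and> k \<noteq> k0 \<and> st!k} = Suc n"
    then obtain k where kin: "k \<in> {k. k < DD \<and> k \<noteq> k0 \<and> st!k}"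
      by (metis card.empty ex_in_conv nat.distinct(1))
    hence k: "k < DD" "k \<noteq> k0" "st!k" by auto
    let ?st' = "st[k := False]"
    have len': "length ?st' = DD" using len by simp
    have s0': "?st'!k0" using s0 k by (simp add: nth_list_update)
    have e1: "{k'. k' < DD \<and> k' \<noteq> k0 \<and> ?st'!k'} = {k'. k' < DD \<and> k' \<noteq> k0 \<and> st!k'} - {k}"
      using len k by (auto simp: nth_list_update split: if_splits)
    have c': "card {k'. k' < DD \<and> k' \<noteq> k0 \<and> ?st'!k'} = n" using c kin unfolding e1 by simp
    have e2: "{k'. k' < DD \<and> ?st'!k'} = {k'. k' < DD \<and> st!k'} - {k}"
      using len k by (auto simp: nth_list_update split: if_splits)
    have kin2: "k \<in> {k'. k' < DD \<and> st!k'}" using k by simp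
    have fin2: "finite {k'. k' < DD \<and> st!k'}" by simp
    have pos: "card {k'. k' < DD \<and> st!k'} > 0" using fin2 kin2 card_gt_0_iff by blast
    have cc: "cnt ?st' + 1 = cnt st" unfolding cnt_def e2 using kin2 fin2 pos
      by (simp add: card_Diff_singleton)
    have IH: "state_loops wd ?st' + 5 \<le> DD + cnt ?st'" using Suc.IH len' s0' c' by blast
    have "state_loops wd st \<le> state_loops wd ?st' + 1" by (rule LA[OF len k(1) k(3)])
    then show "state_loops wd st + 5 \<le> DD + cnt st" using IH cc by linarith
  qed
qed

lemma MB: "length st = DD \<Longrightarrow> k0 < DD \<Longrightarrow> st!k0 \<Longrightarrow> state_loops wd st + 5 \<le> DD + cnt st"
  using MB_aux by blast

lemma sexp: "length st = DD \<Longrightarrow> state_exp wd st = 2 * int DD - int (cnt st)"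
proof -
  have "state_exp wd st = (\<Sum>k<DD. (if st!k then 1 else 2::int))"
    unfolding state_exp_def len_wd
    by (intro sum.cong refl) (simp add: wd_nth crossing_sign_def)
  thus ?thesis by (simp add: sum_12 cnt_def)
qed

lemma writhe_wd: "writhe wd = int DD"
proof -
  have "writhe wd = (\<Sum>k<DD. (1::int))"
    unfolding writhe_def len_wd
    by (intro sum.cong refl) (simp add: wd_nth crossing_sign_def)
  thus ?thesis by simp
qed

end



context L begin

lemma main: "leading_term (V3 wd) 1 (3 * int DD - 4)"
proof -
  let ?S = "{st :: bool list. length st = length wd}"
  let ?st0 = "replicate DD False"
  define tm where "tm st = smon (state_exp wd st) * loop_val ^ (state_loops wd st - 1)" for st
  have finS: "finite ?S" using finite_lists_length_eq[of "UNIV::bool set" "length wd"] by simp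
  have st0S: "?st0 \<in> ?S" by (simp add: len_wd)
  have V: "V3 wd = (-1) ^ DD * (\<Sum>st\<in>?S. tm st)"
  proof -
    have w: "nat \<bar>writhe wd\<bar> = DD" unfolding writhe_wd by (metis abs_of_nat nat_int)
    show ?thesis unfolding V3_def tm_def w ..
  qed
  have e0: "state_exp wd ?st0 = 2 * int DD" using sexp[of ?st0] by (simp add: cnt_def)
  have l0: "state_loops wd ?st0 = DD - 3" by (rule L0)
  have top0: "state_exp wd ?st0 + int (state_loops wd ?st0 - 1) = 3 * int DD - 4"
    using e0 l0 A1 A2 A3 A4 by simp
  have others: "fls_nth (tm st) m = 0" if st: "st \<in> ?S - {?st0}" and m: "m \<ge> 3 * int DD - 4" for st m
  proof -
    have len: "length st = DD" using st by (simp add: len_wd)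
    have "\<exists>k<DD. st!k"
    proof (rule ccontr)
      assume "\<not> (\<exists>k<DD. st!k)"
      hence "st = ?st0" using len by (intro nth_equalityI) auto
      thus False using st by simp
    qed
    then obtain k0 where k0: "k0 < DD" "st!k0" by blast
    have mb: "state_loops wd st + 5 \<le> DD + cnt st" by (rule MB[OF len k0])
    have se: "state_exp wd st = 2 * int DD - int (cnt st)" by (rule sexp[OF len])
    have mb': "int (state_loops wd st) + 5 \<le> int DD + int (cnt st)" using mb by linarith
    have l1: "int (state_loops wd st - 1) \<le> int (state_loops wd st)" by simp
    have ar: "(L::int) + 5 \<le> D + c \<Longrightarrow> L1 \<le> L \<Longrightarrow> e = 2*D - c \<Longrightarrow> 3*D - 4 \<le> mm \<Longrightarrow> e + L1 < mm"
      for L D c L1 e mm by linarith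
    have "state_exp wd st + int (state_loops wd st - 1) < m" by (rule ar[OF mb' l1 se m])
    thus ?thesis unfolding tm_def by (rule term_hi)
  qed
  have sumnth: "fls_nth (\<Sum>st\<in>?S. tm st) m = fls_nth (tm ?st0) m" if m: "m \<ge> 3 * int DD - 4" for m
  proof -
    have "fls_nth (\<Sum>st\<in>?S. tm st) m = (\<Sum>st\<in>?S. fls_nth (tm st) m)" by (rule fls_nth_sum)
    also have "\<dots> = fls_nth (tm ?st0) m + (\<Sum>st\<in>?S - {?st0}. fls_nth (tm st) m)"
      using finS st0S by (rule sum.remove)
    also have "(\<Sum>st\<in>?S - {?st0}. fls_nth (tm st) m) = 0"
      using others m by (intro sum.neutral) blast
    finally show ?thesis by simp
  qed
  have at_top: "fls_nth (V3 wd) (3 * int DD - 4) = 1"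
  proof -
    have "fls_nth (tm ?st0) (3 * int DD - 4) = (-1) ^ (state_loops wd ?st0 - 1)"
      unfolding tm_def using term_top[of "state_exp wd ?st0" "state_loops wd ?st0 - 1"] top0 by simp
    also have "\<dots> = (-1) ^ (DD - 4)" using l0 A1 A2 A3 A4 by (simp add: numeral_eq_Suc)
    finally have t: "fls_nth (tm ?st0) (3 * int DD - 4) = (-1) ^ (DD - 4)" .
    have "fls_nth (V3 wd) (3 * int DD - 4) = (-1) ^ DD * (-1) ^ (DD - 4)"
      unfolding V neg1_pow_nth using sumnth t by simp
    also have "\<dots> = (-1) ^ (DD + (DD - 4))" by (simp add: power_add)
    also have "DD + (DD - 4) = 2 * (DD - 2)" using A1 A2 A3 A4 by simp
    also have "(-1::int) ^ (2 * (DD - 2)) = 1" by simp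
    finally show ?thesis .
  qed
  have above: "fls_nth (V3 wd) m = 0" if "m > 3 * int DD - 4" for m
  proof -
    have "fls_nth (tm ?st0) m = 0" unfolding tm_def using that top0 by (intro term_hi) simp
    thus ?thesis unfolding V neg1_pow_nth using sumnth that by simp
  qed
  show ?thesis unfolding leading_term_def using at_top above by simp
qed

end

theorem proposition4p4:
  fixes a1 a2 a3 a4 :: nat
  assumes "a1 \<ge> 2" and "a2 \<ge> 2" and "a3 \<ge> 2" and "a4 \<ge> 2"
  defines "D \<equiv> a1 + a2 + a3 + a4"
  shows "leading_term (V3 (replicate a1 1 @ replicate a2 2 @ replicate a3 1 @ replicate a4 2))
           1 (3 * int D - 4)"
proof -
  interpret L a1 a2 a3 a4 using assms by unfold_locales auto
  show ?thesis using main unfolding D_def wd_def by simp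
qed



end
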